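(* Assume the Lang–Waldschmidt conjecture: for every $\epsilon>0$ there is $C(\epsilon)>0$ such that for all positive integers $a_1,\dots,a_n$ and nonzero integers $b_1,\dots,b_n$ with $a_1^{b_1}\cdots a_n^{b_n}\neq1$, $$ \left|a_1^{b_1}\cdots a_n^{b_n}-1\right|\ge\frac{C(\epsilon)\max_j|b_j|}{|b_1\cdots b_na_1\cdots a_n|^{1+\epsilon}}. $$ Let $\epsilon>0$. Then there is a constant $C'_\epsilon$ such that for all $x\in\mathbb{P}^1(\mathbb{Q})\setminus\{0,1,\infty\}$, $$ \lambda_{\mathbb{P}^1,\infty}(1,x)<(1+\epsilon)N^{(1)}_{\mathbb{P}^1}([0]+[\infty],x)+\epsilon\, h(x)+C'_\epsilon. $$
   Context: For $x=b/c\in\mathbb{Q}$ with $b,c$ coprime integers, $h(x)=\log\max\{|b|,|c|\}$. $\lambda_{\mathbb{P}^1,\infty}(1,x)=\log^+(|1-x|^{-1})$ up to a bounded function, where $\log^+t=\log\max\{1,t\}$. Up to a bounded function, $N^{(1)}_{\mathbb{P}^1}([0]+[\infty],x)=\log\mathrm{rad}(bc)$, where $\mathrm{rad}(m)$ is the product of the distinct primes dividing $m$ (this is the truncated counting function $\sum_p\min\{\lambda_{\mathbb{P}^1,p}([0]+[\infty],x),\log p\}$). *)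

theory Defs
  imports Complex_Main "HOL-Computational_Algebra.Primes"
begin

definition logplus :: "real \<Rightarrow> real" where
  "logplus t = ln (max 1 t)"

text \<open>Radical: product of the distinct primes dividing m (rad 0 = 1 by this convention; not used).\<close>
definition rad :: "nat \<Rightarrow> nat" where
  "rad m = (\<Prod>p\<in>prime_factors m. p)"

definition height :: "rat \<Rightarrow> real" where
  "height x = (case quotient_of x of (b, c) \<Rightarrow> ln (real_of_int (max \<bar>b\<bar> \<bar>c\<bar>)))"

text \<open>Proximity function lambda_{P^1,infty}(1,x) = log^+ (|1-x|^{-1}) (representative).\<close>
definition lambda_one :: "rat \<Rightarrow> real" where
  "lambda_one x = logplus (1 / \<bar>1 - real_of_rat x\<bar>)"

text \<open>Truncated counting function N^(1)([0]+[infty],x) = log rad(bc) (representative).\<close>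
definition N1_zero_inf :: "rat \<Rightarrow> real" where
  "N1_zero_inf x = (case quotient_of x of (b, c) \<Rightarrow> ln (real (rad (nat \<bar>b * c\<bar>))))"

definition Lang_Waldschmidt :: bool where
  "Lang_Waldschmidt \<longleftrightarrow>
    (\<forall>\<epsilon>::real. \<epsilon> > 0 \<longrightarrow> (\<exists>C::real. C > 0 \<and>
      (\<forall>(n::nat) (a::nat \<Rightarrow> int) (b::nat \<Rightarrow> int).
         n \<ge> 1 \<longrightarrow> (\<forall>j<n. a j > 0) \<longrightarrow> (\<forall>j<n. b j \<noteq> 0) \<longrightarrow>
         (\<Prod>j<n. real_of_int (a j) powi b j) \<noteq> 1 \<longrightarrow>
         \<bar>(\<Prod>j<n. real_of_int (a j) powi b j) - 1\<bar> \<ge>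
           C * real_of_int (Max ((\<lambda>j. \<bar>b j\<bar>) ` {..<n})) /
             \<bar>real_of_int ((\<Prod>j<n. b j) * (\<Prod>j<n. a j))\<bar> powr (1 + \<epsilon>))))"

end

theory Submission
  imports Defs
begin

lemma per_prime:
  fixes \<delta> :: real and p e :: nat
  assumes d: "\<delta> > 0" and p: "p \<ge> 2"
  shows "real e \<le> (if real p < 2 powr (1/\<delta>) then max 1 (1/(\<delta> * ln 2)) else 1) * real p powr (\<delta> * e)"
proof (cases "real p < 2 powr (1/\<delta>)")
  case True
  have "\<delta> * e * ln 2 \<le> exp (\<delta> * e * ln 2)"
    by (smt (verit) exp_ge_add_one_self)
  also have "exp (\<delta> * e * ln 2) = 2 powr (\<delta> * e)" by (simp add: powr_def)
  also have "\<dots> \<le> real p powr (\<delta> * e)" using p d by (intro powr_mono2) auto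
  finally have 1: "\<delta> * ln 2 * e \<le> real p powr (\<delta> * e)" by (simp add: mult_ac)
  have "real e = (1/(\<delta> * ln 2)) * (\<delta> * ln 2 * e)" using d by simp
  also have "\<dots> \<le> (1/(\<delta> * ln 2)) * real p powr (\<delta> * e)" using 1 d by (intro mult_left_mono) auto
  also have "\<dots> \<le> max 1 (1/(\<delta> * ln 2)) * real p powr (\<delta> * e)" by (intro mult_right_mono) auto
  finally show ?thesis using True by simp
next
  case False
  have "2 = (2 powr (1/\<delta>)) powr \<delta>" using d by (simp add: powr_powr)
  also have "\<dots> \<le> real p powr \<delta>" using False d by (intro powr_mono2) auto
  finally have 2: "2 \<le> real p powr \<delta>" .
  have "real e \<le> 2 ^ e" by (metis of_nat_le_iff of_nat_numeral of_nat_power less_exp less_imp_le)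
  also have "\<dots> \<le> (real p powr \<delta>) ^ e" using 2 by (intro power_mono) auto
  also have "\<dots> = real p powr (\<delta> * e)" using p by (simp add: powr_realpow[symmetric] powr_powr)
  finally show ?thesis using False by simp
qed

lemma divisor_bound:
  fixes \<delta> :: real
  assumes d: "\<delta> > 0"
  shows "\<exists>K\<ge>1. \<forall>N::nat. N > 0 \<longrightarrow>
     (\<Prod>p\<in>prime_factors N. real (multiplicity p N)) \<le> K * real N powr \<delta>"
proof -
  define K0 where "K0 = max 1 (1/(\<delta> * ln 2))"
  define M where "M = nat \<lceil>2 powr (1/\<delta>)\<rceil>"
  define Kp where "Kp p = (if real p < 2 powr (1/\<delta>) then K0 else 1)" for p :: nat
  have K0: "K0 \<ge> 1" by (simp add: K0_def)
  show ?thesis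
  proof (intro exI[of _ "K0 ^ M"] conjI allI impI)
    show "1 \<le> K0 ^ M" using K0 by simp
    fix N :: nat assume N: "N > 0"
    let ?P = "prime_factors N"
    have "(\<Prod>p\<in>?P. real (multiplicity p N)) \<le> (\<Prod>p\<in>?P. Kp p * real p powr (\<delta> * multiplicity p N))"
      apply (intro prod_mono conjI)
      subgoal by simp
      subgoal for p using per_prime[OF d, of p "multiplicity p N"]
          prime_ge_2_nat[OF in_prime_factors_imp_prime, of p N]
        unfolding Kp_def K0_def by presburger
      done
    also have "\<dots> = (\<Prod>p\<in>?P. Kp p) * (\<Prod>p\<in>?P. real p powr (\<delta> * multiplicity p N))"
      by (simp add: prod.distrib)
    also have "(\<Prod>p\<in>?P. real p powr (\<delta> * multiplicity p N)) = (\<Prod>p\<in>?P. real (p ^ multiplicity p N) powr \<delta>)"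
    proof (intro prod.cong refl)
      fix p assume "p \<in> ?P"
      then have "real p > 0" using prime_gt_0_nat[OF in_prime_factors_imp_prime] by simp
      then show "real p powr (\<delta> * multiplicity p N) = real (p ^ multiplicity p N) powr \<delta>"
        by (simp add: powr_realpow[symmetric] powr_powr mult_ac)
    qed
    also have "\<dots> = real (\<Prod>p\<in>?P. p ^ multiplicity p N) powr \<delta>"
      by (simp add: prod_powr_distrib)
    also have "(\<Prod>p\<in>?P. p ^ multiplicity p N) = N"
      using prod_prime_factors[of N] N by simp
    also have "(\<Prod>p\<in>?P. Kp p) = (\<Prod>p\<in>?P \<inter> {p. real p < 2 powr (1/\<delta>)}. K0)"
      unfolding Kp_def by (simp add: prod.If_cases)
    also have "\<dots> = K0 ^ card (?P \<inter> {p. real p < 2 powr (1/\<delta>)})" by simp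
    also have "\<dots> \<le> K0 ^ M"
    proof (intro power_increasing K0)
      have "?P \<inter> {p. real p < 2 powr (1/\<delta>)} \<subseteq> {..<M}"
        unfolding M_def by auto linarith
      then show "card (?P \<inter> {p. real p < 2 powr (1/\<delta>)}) \<le> M"
        by (metis card_lessThan card_mono finite_lessThan)
    qed
    finally show "(\<Prod>p\<in>?P. real (multiplicity p N)) \<le> K0 ^ M * real N powr \<delta>"
      by (simp add: mult_right_mono)
  qed
qed

lemma prod_superset:
  fixes B :: nat
  assumes B: "B > 0" and P: "finite P" "prime_factors B \<subseteq> P" "\<forall>p\<in>P. prime p"
  shows "(\<Prod>p\<in>P. p ^ multiplicity p B) = B"
proof -
  have "(\<Prod>p\<in>P. p ^ multiplicity p B) = (\<Prod>p\<in>prime_factors B. p ^ multiplicity p B)"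
  proof (rule prod.mono_neutral_right[OF P(1) P(2)], intro ballI)
    fix p assume "p \<in> P - prime_factors B"
    then have "\<not> p dvd B" using P B by (auto simp: in_prime_factors_iff)
    then show "p ^ multiplicity p B = 1" by (simp add: not_dvd_imp_multiplicity_0)
  qed
  also have "\<dots> = B" using prod_prime_factors[of B] B by simp
  finally show ?thesis .
qed

lemma close_case:
  fixes B Cn :: nat and C \<delta> :: real
  assumes LWi: "\<forall>(n::nat) (a::nat \<Rightarrow> int) (b::nat \<Rightarrow> int).
         n \<ge> 1 \<longrightarrow> (\<forall>j<n. a j > 0) \<longrightarrow> (\<forall>j<n. b j \<noteq> 0) \<longrightarrow>
         (\<Prod>j<n. real_of_int (a j) powi b j) \<noteq> 1 \<longrightarrow>
         \<bar>(\<Prod>j<n. real_of_int (a j) powi b j) - 1\<bar> \<ge>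
           C * real_of_int (Max ((\<lambda>j. \<bar>b j\<bar>) ` {..<n})) /
             \<bar>real_of_int ((\<Prod>j<n. b j) * (\<Prod>j<n. a j))\<bar> powr (1 + \<delta>)"
    and Cpos: "C > 0"
    and B: "B > 0" and Cn: "Cn > 0" and cop: "coprime B Cn" and ne: "B \<noteq> Cn"
  shows "C / ((\<Prod>p\<in>prime_factors (B*Cn). real (multiplicity p (B*Cn))) * real (rad (B*Cn))) powr (1 + \<delta>)
           \<le> \<bar>real B / real Cn - 1\<bar>"
proof -
  define N where "N = B * Cn"
  define P where "P = prime_factors N"
  define xs where "xs = sorted_list_of_set P"
  define n where "n = length xs"
  define g where "g p = int (multiplicity p B) - int (multiplicity p Cn)" for p
  define a where "a j = int (xs ! j)" for j
  define bb where "bb j = g (xs ! j)" for j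
  have finP: "finite P" unfolding P_def by simp
  have bij: "bij_betw ((!) xs) {..<n} P"
    unfolding xs_def n_def using finP by (intro bij_betw_nth) auto
  have reidx: "(\<Prod>j<n. h (xs ! j)) = (\<Prod>p\<in>P. h p)" for h :: "nat \<Rightarrow> 'b::comm_monoid_mult"
    using prod.reindex_bij_betw[OF bij, of h] by simp
  have img: "(\<lambda>j. h (xs ! j)) ` {..<n} = h ` P" for h :: "nat \<Rightarrow> 'b"
    using bij unfolding bij_betw_def by (metis image_image)
  have primeP: "\<forall>p\<in>P. prime p" unfolding P_def by auto
  have N0: "N \<noteq> 0" unfolding N_def using B Cn by simp
  have N1: "N \<noteq> 1" unfolding N_def using ne by auto
  have Pne: "P \<noteq> {}"
  proof
    assume "P = {}"
    then have "prime_factorization N = {#}" unfolding P_def by simp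
    then show False using N0 N1 by (simp add: prime_factorization_empty_iff)
  qed
  have gabs: "\<bar>g p\<bar> = int (multiplicity p N)" and gne: "g p \<noteq> 0" if p: "p \<in> P" for p
  proof -
    have pp: "prime p" and pd: "p dvd N" using p N0 unfolding P_def by (auto simp: in_prime_factors_iff)
    have m: "multiplicity p N = multiplicity p B + multiplicity p Cn"
      unfolding N_def using pp B Cn by (intro prime_elem_multiplicity_mult_distrib) auto
    have "\<not> (p dvd B \<and> p dvd Cn)"
      using cop pp by (metis coprime_common_divisor not_prime_unit)
    then have z: "multiplicity p B = 0 \<or> multiplicity p Cn = 0" by (auto simp: not_dvd_imp_multiplicity_0)
    have pos: "multiplicity p N > 0" using pp pd N0 by (simp add: prime_multiplicity_gt_zero_iff)
    show "\<bar>g p\<bar> = int (multiplicity p N)" using z m unfolding g_def by auto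
    show "g p \<noteq> 0" using z m pos unfolding g_def by auto
  qed
  have n1: "n \<ge> 1" using bij Pne unfolding bij_betw_def by (cases n) auto
  have apos: "\<forall>j<n. a j > 0"
  proof (intro allI impI)
    fix j assume "j < n"
    then have "xs ! j \<in> P" using bij unfolding bij_betw_def by auto
    then show "a j > 0" unfolding a_def using primeP prime_gt_0_nat by auto
  qed
  have bne: "\<forall>j<n. bb j \<noteq> 0"
  proof (intro allI impI)
    fix j assume "j < n"
    then have "xs ! j \<in> P" using bij unfolding bij_betw_def by auto
    then show "bb j \<noteq> 0" unfolding bb_def using gne by auto
  qed
  have facB: "prime_factors B \<subseteq> P" and facC: "prime_factors Cn \<subseteq> P"
    unfolding P_def N_def using B Cn by (auto simp: in_prime_factors_iff)
  have prodeq: "(\<Prod>j<n. real_of_int (a j) powi bb j) = real B / real Cn"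
  proof -
    have "(\<Prod>j<n. real_of_int (a j) powi bb j) = (\<Prod>p\<in>P. real p powi g p)"
      unfolding a_def bb_def using reidx[of "\<lambda>p. real p powi g p"] by simp
    also have "\<dots> = (\<Prod>p\<in>P. real p ^ multiplicity p B / real p ^ multiplicity p Cn)"
    proof (intro prod.cong refl)
      fix p assume "p \<in> P"
      then have "real p \<noteq> 0" using primeP prime_gt_0_nat by fastforce
      then show "real p powi g p = real p ^ multiplicity p B / real p ^ multiplicity p Cn"
        unfolding g_def by (simp add: power_int_diff)
    qed
    also have "\<dots> = (\<Prod>p\<in>P. real p ^ multiplicity p B) / (\<Prod>p\<in>P. real p ^ multiplicity p Cn)"
      by (simp add: prod_dividef)
    also have "(\<Prod>p\<in>P. real p ^ multiplicity p B) = real B"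
      using prod_superset[OF B finP facB primeP] by (metis (no_types, lifting) of_nat_power of_nat_prod prod.cong)
    also have "(\<Prod>p\<in>P. real p ^ multiplicity p Cn) = real Cn"
      using prod_superset[OF Cn finP facC primeP] by (metis (no_types, lifting) of_nat_power of_nat_prod prod.cong)
    finally show ?thesis .
  qed
  have ne1: "real B / real Cn \<noteq> 1" using ne Cn by (simp add: divide_eq_1_iff)
  have L: "(\<Prod>j<n. real_of_int (a j) powi bb j) \<noteq> 1 \<Longrightarrow> \<bar>(\<Prod>j<n. real_of_int (a j) powi bb j) - 1\<bar> \<ge>
           C * real_of_int (Max ((\<lambda>j. \<bar>bb j\<bar>) ` {..<n})) /
             \<bar>real_of_int ((\<Prod>j<n. bb j) * (\<Prod>j<n. a j))\<bar> powr (1 + \<delta>)"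
    using LWi n1 apos bne by blast
  have main: "\<bar>real B / real Cn - 1\<bar> \<ge> C * real_of_int (Max ((\<lambda>j. \<bar>bb j\<bar>) ` {..<n})) /
             \<bar>real_of_int ((\<Prod>j<n. bb j) * (\<Prod>j<n. a j))\<bar> powr (1 + \<delta>)" using L prodeq ne1 by simp
  have Mx: "Max ((\<lambda>j. \<bar>bb j\<bar>) ` {..<n}) \<ge> 1"
  proof -
    have "\<bar>bb 0\<bar> \<le> Max ((\<lambda>j. \<bar>bb j\<bar>) ` {..<n})" using n1 by (intro Max_ge) auto
    moreover have "\<bar>bb 0\<bar> \<ge> 1" using bne n1 by auto
    ultimately show ?thesis by simp
  qed
  define E where "E = (\<Prod>p\<in>P. real (multiplicity p N))"
  have den: "\<bar>real_of_int ((\<Prod>j<n. bb j) * (\<Prod>j<n. a j))\<bar> = E * real (rad N)"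
  proof -
    have "\<bar>real_of_int ((\<Prod>j<n. bb j) * (\<Prod>j<n. a j))\<bar> = (\<Prod>j<n. \<bar>real_of_int (bb j)\<bar>) * (\<Prod>j<n. real_of_int (a j))"
      using apos by (simp add: abs_mult abs_prod abs_of_pos prod_pos)
    also have "(\<Prod>j<n. \<bar>real_of_int (bb j)\<bar>) = (\<Prod>p\<in>P. \<bar>real_of_int (g p)\<bar>)"
      unfolding bb_def using reidx[of "\<lambda>p. \<bar>real_of_int (g p)\<bar>"] by simp
    also have "\<dots> = E" unfolding E_def
      by (intro prod.cong refl) (metis gabs of_int_abs of_int_of_nat_eq)
    also have "(\<Prod>j<n. real_of_int (a j)) = (\<Prod>p\<in>P. real p)"
      unfolding a_def using reidx[of "\<lambda>p. real p"] by simp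
    also have "\<dots> = real (rad N)" unfolding rad_def P_def by simp
    finally show ?thesis .
  qed
  have Epos: "E > 0" unfolding E_def using gabs gne
    by (intro prod_pos) (metis abs_0 of_nat_0_less_iff neq0_conv of_nat_eq_0_iff zero_less_abs_iff)
  have Rpos: "real (rad N) > 0" unfolding rad_def
    by (simp, intro prod_pos) (auto intro: prime_gt_0_nat)
  have "C / (E * real (rad N)) powr (1 + \<delta>) \<le> C * real_of_int (Max ((\<lambda>j. \<bar>bb j\<bar>) ` {..<n})) /
             (E * real (rad N)) powr (1 + \<delta>)"
    using Mx Cpos Epos Rpos by (intro divide_right_mono) auto
  with main den show ?thesis unfolding E_def P_def N_def by simp
qed

lemma rad_ge1: "rad m \<ge> 1"
  unfolding rad_def
proof (intro prod_ge_1)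
  fix p assume "p \<in> prime_factors m"
  then have "prime p" by auto
  then show "1 \<le> p" using prime_gt_0_nat by (simp add: Suc_leI)
qed

theorem lemma5p2:
  fixes \<epsilon> :: real
  assumes LW: Lang_Waldschmidt
    and eps: "\<epsilon> > 0"
  shows "\<exists>C'::real. \<forall>x::rat. x \<noteq> 0 \<and> x \<noteq> 1 \<longrightarrow>
           lambda_one x < (1 + \<epsilon>) * N1_zero_inf x + \<epsilon> * height x + C'"
proof -
  define \<delta> where "\<delta> = min 1 (\<epsilon>/4)"
  have d0: "\<delta> > 0" and d1: "\<delta> \<le> 1" and d4: "4 * \<delta> \<le> \<epsilon>" using eps by (auto simp: \<delta>_def)
  obtain C where Cpos: "C > 0" and LWi: "\<forall>(n::nat) (a::nat \<Rightarrow> int) (b::nat \<Rightarrow> int).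
         n \<ge> 1 \<longrightarrow> (\<forall>j<n. a j > 0) \<longrightarrow> (\<forall>j<n. b j \<noteq> 0) \<longrightarrow>
         (\<Prod>j<n. real_of_int (a j) powi b j) \<noteq> 1 \<longrightarrow>
         \<bar>(\<Prod>j<n. real_of_int (a j) powi b j) - 1\<bar> \<ge>
           C * real_of_int (Max ((\<lambda>j. \<bar>b j\<bar>) ` {..<n})) /
             \<bar>real_of_int ((\<Prod>j<n. b j) * (\<Prod>j<n. a j))\<bar> powr (1 + \<delta>)"
    using LW d0 unfolding Lang_Waldschmidt_def by blast
  obtain K where K1: "K \<ge> 1" and KB: "\<forall>N::nat. N > 0 \<longrightarrow>
     (\<Prod>p\<in>prime_factors N. real (multiplicity p N)) \<le> K * real N powr \<delta>"
    using divisor_bound[OF d0] by blast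
  define C' where "C' = max (ln 2) (2 * ln K - ln C) + 1"
  show ?thesis
  proof (intro exI[of _ C'] allI impI)
    fix x :: rat assume x: "x \<noteq> 0 \<and> x \<noteq> 1"
    obtain b c where q: "quotient_of x = (b, c)" by (cases "quotient_of x")
    have cpos: "c > 0" using q by (rule quotient_of_denom_pos)
    have cop: "coprime b c" using q by (rule quotient_of_coprime)
    have xd: "x = of_int b / of_int c" using q by (rule quotient_of_div)
    define y where "y = real_of_rat x"
    have yd: "y = real_of_int b / real_of_int c" unfolding y_def xd by (simp add: of_rat_divide)
    have b0: "b \<noteq> 0" using x xd by auto
    define R where "R = rad (nat \<bar>b * c\<bar>)"
    have N1d: "N1_zero_inf x = ln (real R)" unfolding N1_zero_inf_def q R_def by simp
    have hd: "height x = ln (real_of_int (max \<bar>b\<bar> \<bar>c\<bar>))" unfolding height_def q by simp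
    have lamd: "lambda_one x = ln (max 1 (1 / \<bar>1 - y\<bar>))" unfolding lambda_one_def logplus_def y_def by simp
    have R1: "real R \<ge> 1" unfolding R_def using rad_ge1 by simp
    have N1pos: "N1_zero_inf x \<ge> 0" unfolding N1d using R1 by simp
    have hpos: "height x \<ge> 0" unfolding hd using b0 by simp
    show "lambda_one x < (1 + \<epsilon>) * N1_zero_inf x + \<epsilon> * height x + C'"
    proof (cases "\<bar>1 - y\<bar> < 1/2")
      case False
      have "1 / \<bar>1 - y\<bar> \<le> 2" using False by (subst divide_le_eq) auto
      then have "max 1 (1 / \<bar>1 - y\<bar>) \<le> 2" by simp
      then have "lambda_one x \<le> ln 2" unfolding lamd by simp
      moreover have "0 \<le> (1 + \<epsilon>) * N1_zero_inf x + \<epsilon> * height x"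
        using eps N1pos hpos by simp
      ultimately show ?thesis unfolding C'_def by linarith
    next
      case True
      have bpos: "b > 0"
      proof (rule ccontr)
        assume "\<not> b > 0"
        then have "y \<le> 0" unfolding yd using cpos by (simp add: divide_nonpos_pos)
        then show False using True by simp
      qed
      define B where "B = nat b"
      define Cn where "Cn = nat c"
      have bB: "b = int B" and cC: "c = int Cn" using bpos cpos by (auto simp: B_def Cn_def)
      have B0: "B > 0" and C0: "Cn > 0" using bpos cpos bB cC by auto
      have copn: "coprime B Cn" using cop bB cC by simp
      have neBC: "B \<noteq> Cn"
      proof
        assume "B = Cn"
        then have "x = 1" using xd bB cC C0 by simp
        then show False using x by simp
      qed
      define N where "N = B * Cn"
      define E where "E = (\<Prod>p\<in>prime_factors N. real (multiplicity p N))"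
      have RN: "R = rad N" unfolding R_def N_def bB cC by (simp add: nat_mult_distrib)
      have yBC: "y = real B / real Cn" unfolding yd bB cC by simp
      have cc: "C / (E * real R) powr (1 + \<delta>) \<le> \<bar>1 - y\<bar>"
        using close_case[OF LWi Cpos B0 C0 copn neBC] unfolding E_def N_def RN yBC by simp
      have Epos: "E > 0" unfolding E_def
      proof (intro prod_pos)
        fix p assume "p \<in> prime_factors N"
        then have "prime p" "p dvd N" "N \<noteq> 0" by (auto simp: in_prime_factors_iff)
        then show "real (multiplicity p N) > 0" by (simp add: prime_multiplicity_gt_zero_iff)
      qed
      have ERpos: "E * real R > 0" using Epos R1 by simp
      have ypos: "\<bar>1 - y\<bar> > 0"
      proof -
        have "C / (E * real R) powr (1 + \<delta>) > 0" using Cpos ERpos R1 by (intro divide_pos_pos) auto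
        then show ?thesis using cc by linarith
      qed
      have "1 / \<bar>1 - y\<bar> \<le> (E * real R) powr (1 + \<delta>) / C"
      proof -
        have P: "(E * real R) powr (1 + \<delta>) > 0" using ERpos by (metis less_irrefl powr_gt_zero)
        have "C \<le> \<bar>1 - y\<bar> * (E * real R) powr (1 + \<delta>)"
          using cc P by (simp add: pos_divide_le_eq)
        then show ?thesis using P Cpos ypos by (simp add: divide_simps mult.commute)
      qed
      moreover have g1: "1 / \<bar>1 - y\<bar> \<ge> 1" using True ypos by (simp add: field_simps)
      ultimately have "ln (1 / \<bar>1 - y\<bar>) \<le> ln ((E * real R) powr (1 + \<delta>) / C)"
        by (intro ln_mono) auto
      moreover have "max 1 (1 / \<bar>1 - y\<bar>) = 1 / \<bar>1 - y\<bar>" using g1 by simp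
      ultimately have "lambda_one x \<le> ln ((E * real R) powr (1 + \<delta>) / C)"
        unfolding lamd by simp
      also have "\<dots> = (1 + \<delta>) * (ln E + ln (real R)) - ln C"
        using ERpos Cpos Epos R1 by (simp add: ln_div ln_powr ln_mult)
      finally have L1: "lambda_one x \<le> (1 + \<delta>) * (ln E + ln (real R)) - ln C" .
      have N0: "N > 0" unfolding N_def using B0 C0 by simp
      have "E \<le> K * real N powr \<delta>" using KB N0 unfolding E_def by blast
      then have "ln E \<le> ln (K * real N powr \<delta>)" using Epos by simp
      also have "\<dots> = ln K + \<delta> * ln (real N)" using K1 N0 by (simp add: ln_mult ln_powr)
      finally have lnE: "ln E \<le> ln K + \<delta> * ln (real N)" .
      have hB: "ln (real N) \<le> 2 * height x"
      proof -
        have "ln (real N) = ln (real B) + ln (real Cn)" unfolding N_def using B0 C0 by (simp add: ln_mult)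
        moreover have "ln (real B) \<le> height x" unfolding hd bB cC using B0 by simp
        moreover have "ln (real Cn) \<le> height x" unfolding hd bB cC using C0 by simp
        ultimately show ?thesis by simp
      qed
      have lnR: "ln (real R) \<ge> 0" using R1 by simp
      have lnK: "ln K \<ge> 0" using K1 by simp
      have lnN: "ln (real N) \<ge> 0" using N0 by simp
      have "lambda_one x \<le> (1 + \<delta>) * ln (real R) + (1 + \<delta>) * ln K + (1 + \<delta>) * \<delta> * ln (real N) - ln C"
      proof -
        have "(1 + \<delta>) * ln E \<le> (1 + \<delta>) * (ln K + \<delta> * ln (real N))"
          using lnE d0 by (intro mult_left_mono) auto
        then show ?thesis using L1 by (simp add: algebra_simps)
      qed
      also have "(1 + \<delta>) * ln (real R) \<le> (1 + \<epsilon>) * ln (real R)"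
        using lnR d4 d0 by (intro mult_right_mono) auto
      also have "(1 + \<delta>) * ln K \<le> 2 * ln K" using lnK d1 by (intro mult_right_mono) auto
      also have "(1 + \<delta>) * \<delta> * ln (real N) \<le> (2 * \<delta>) * (2 * height x)"
        using hB d1 d0 lnN by (intro mult_mono) auto
      also have "(2 * \<delta>) * (2 * height x) \<le> \<epsilon> * height x"
      proof -
        have "(4 * \<delta>) * height x \<le> \<epsilon> * height x" using d4 hpos by (intro mult_right_mono)
        then show ?thesis by (simp add: algebra_simps)
      qed
      finally show ?thesis unfolding N1d C'_def by linarith
    qed
  qed
qed

end
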